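(* Let $\vec{G}$ be a DDMOG on $n$ vertices with DDM labeling $g$, and index its vertices as $v_1,\dots,v_n$ so that $g(v_i)=i$. Let $\vec{H}$ be an oriented graph on $m$ vertices, vertex-disjoint from $\vec{G}$, with a bijective labeling $h:V(\vec{H})\to\{n+1,\dots,n+m\}$ such that $k=\max_{v\in V(\vec{H})}|wt_h(v)|\le n$ and, for every $0\le i\le k$, $\sum_{v\in V_h^{i}(\vec{H})}h(v)=\sum_{v\in V_h^{-i}(\vec{H})}h(v)$. Then the weighted sum $\vec{G}\oplus_{wt_h}^0\vec{H}$ is a DDMOG on $n+m$ vertices.
   Context: An oriented graph is a finite digraph without loops such that whenever $(u,v)$ is an arc, $(v,u)$ is not. For a vertex $v$, $N^+(v)=\{x:(x,v)\text{ is an arc}\}$, $N^-(v)=\{x:(v,x)\text{ is an arc}\}$; for a labeling $f$, $wt_f(v)=\sum_{x\in N^+(v)}f(x)-\sum_{x\in N^-(v)}f(x)$. A DDM labeling of an oriented graph on $n$ vertices is a bijection $f:V\to\{1,\dots,n\}$ with $wt_f(v)=0$ for all $v$; a DDMOG is an oriented graph admitting one. For an oriented graph $\vec{H}$ with labeling $h$ and an integer $j$, $V_h^{j}(\vec{H})=\{u\in V(\vec{H}):wt_h(u)=j\}$. Weighted sum: let $\vec{G}$ have vertices $v_1,\dots,v_n$ (indexed by a labeling $g$ with $g(v_i)=i$), let $s\in\mathbb{Z}$, and let $\vec{H}$ (vertex-disjoint from $\vec{G}$) have a labeling $h:V(\vec{H})\to\mathbb{Z}^+$ with $\{|wt_h(u)|:u\in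 V(\vec{H})\}\subseteq\{0\}\cup\{i+s:1\le i\le n\}$. Then $\vec{G}\oplus_{wt_h}^s\vec{H}$ is the oriented graph with vertex set $V(\vec{G})\cup V(\vec{H})$ and arc set $E(\vec{G})\cup E(\vec{H})\cup\bigcup_{i=1}^n(E^i\cup E^{-i})$, where $E^i=\{(v_i,u):u\in V_h^{-i-s}(\vec{H})\}$ and $E^{-i}=\{(u,v_i):u\in V_h^{i+s}(\vec{H})\}$. *)

theory Defs
  imports Main
begin

definition oriented_graph :: "'a set \<Rightarrow> ('a \<times> 'a) set \<Rightarrow> bool" where
  "oriented_graph V E \<longleftrightarrow> finite V \<and> E \<subseteq> V \<times> V \<and>
     (\<forall>v. (v, v) \<notin> E) \<and> (\<forall>u v. (u, v) \<in> E \<longrightarrow> (v, u) \<notin> E)"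

definition in_nbrs :: "'a set \<Rightarrow> ('a \<times> 'a) set \<Rightarrow> 'a \<Rightarrow> 'a set" where
  "in_nbrs V E v = {x \<in> V. (x, v) \<in> E}"

definition out_nbrs :: "'a set \<Rightarrow> ('a \<times> 'a) set \<Rightarrow> 'a \<Rightarrow> 'a set" where
  "out_nbrs V E v = {x \<in> V. (v, x) \<in> E}"

definition wt :: "'a set \<Rightarrow> ('a \<times> 'a) set \<Rightarrow> ('a \<Rightarrow> int) \<Rightarrow> 'a \<Rightarrow> int" where
  "wt V E f v = (\<Sum>x\<in>in_nbrs V E v. f x) - (\<Sum>x\<in>out_nbrs V E v. f x)"

definition DDM_labeling :: "'a set \<Rightarrow> ('a \<times> 'a) set \<Rightarrow> ('a \<Rightarrow> int) \<Rightarrow> bool" where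
  "DDM_labeling V E f \<longleftrightarrow> bij_betw f V {1..int (card V)} \<and> (\<forall>v\<in>V. wt V E f v = 0)"

definition DDMOG :: "'a set \<Rightarrow> ('a \<times> 'a) set \<Rightarrow> bool" where
  "DDMOG V E \<longleftrightarrow> oriented_graph V E \<and> (\<exists>f. DDM_labeling V E f)"

definition wt_class :: "'a set \<Rightarrow> ('a \<times> 'a) set \<Rightarrow> ('a \<Rightarrow> int) \<Rightarrow> int \<Rightarrow> 'a set" where
  "wt_class V E h j = {u \<in> V. wt V E h u = j}"

text \<open>Weighted sum G (+)^s_{wt_h} H, where the vertices of G are indexed by the
  labeling g (v_i is the vertex with g v_i = i, 1 \<le> i \<le> n).
  Returns the arc set; the vertex set is VG \<union> VH.\<close>
definition wsum_arcs ::
  "'a set \<Rightarrow> ('a \<times> 'a) set \<Rightarrow> ('a \<Rightarrow> int) \<Rightarrow> int \<Rightarrow> 'a set \<Rightarrow> ('a \<times> 'a) set \<Rightarrow> ('a \<Rightarrow> int)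
     \<Rightarrow> ('a \<times> 'a) set" where
  "wsum_arcs VG EG g s VH EH h =
     EG \<union> EH
     \<union> (\<Union>i\<in>{1..int (card VG)}. {(v, u). v \<in> VG \<and> g v = i \<and> u \<in> wt_class VH EH h (- i - s)})
     \<union> (\<Union>i\<in>{1..int (card VG)}. {(u, v). v \<in> VG \<and> g v = i \<and> u \<in> wt_class VH EH h (i + s)})"

end

theory Submission
  imports Defs
begin

lemma sum_level:
  assumes "bij_betw g VG {1..int n}"
  shows "(\<Sum>v\<in>{v\<in>VG. g v = c}. g v) = (if 1 \<le> c \<and> c \<le> int n then c else 0)"
proof (cases "1 \<le> c \<and> c \<le> int n")
  case True
  then obtain v where v: "v \<in> VG" "g v = c" using assms
    by (metis atLeastAtMost_iff bij_betw_iff_bijections)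
  have "{v\<in>VG. g v = c} = {v}" using v assms
    by (auto simp: bij_betw_def inj_on_def)
  then show ?thesis using v True by simp
next
  case False
  have e: "{v\<in>VG. g v = c} = {}" using False assms
    by (auto simp: bij_betw_def)
  show ?thesis using False unfolding e by simp
qed

theorem theorem6:
  fixes VG VH :: "'a set" and EG EH :: "('a \<times> 'a) set" and g h :: "'a \<Rightarrow> int"
    and n m :: nat and k :: int
  assumes G: "oriented_graph VG EG" and g: "DDM_labeling VG EG g" and n: "card VG = n"
    and H: "oriented_graph VH EH" and m: "card VH = m"
    and disj: "VG \<inter> VH = {}"
    and h: "bij_betw h VH {int n + 1 .. int n + int m}"
    and k: "k = Max ((\<lambda>v. \<bar>wt VH EH h v\<bar>) ` VH)"
    and kn: "k \<le> int n"
    and bal: "\<forall>i. 0 \<le> i \<and> i \<le> k \<longrightarrow>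
       (\<Sum>v\<in>wt_class VH EH h i. h v) = (\<Sum>v\<in>wt_class VH EH h (- i). h v)"
  shows "DDMOG (VG \<union> VH) (wsum_arcs VG EG g 0 VH EH h) \<and> card (VG \<union> VH) = n + m"
proof -
  define V where "V = VG \<union> VH"
  define E where "E = wsum_arcs VG EG g 0 VH EH h"
  define f where "f = (\<lambda>x. if x \<in> VG then g x else h x)"
  define w where "w = wt VH EH h"
  have fG: "finite VG" and EGs: "EG \<subseteq> VG \<times> VG" and nlG: "\<forall>v. (v, v) \<notin> EG"
    and asG: "\<forall>u v. (u, v) \<in> EG \<longrightarrow> (v, u) \<notin> EG"
    using G by (auto simp: oriented_graph_def)
  have fH: "finite VH" and EHs: "EH \<subseteq> VH \<times> VH" and nlH: "\<forall>v. (v, v) \<notin> EH"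
    and asH: "\<forall>u v. (u, v) \<in> EH \<longrightarrow> (v, u) \<notin> EH"
    using H by (auto simp: oriented_graph_def)
  have gb: "bij_betw g VG {1..int n}" and gw: "\<forall>v\<in>VG. wt VG EG g v = 0"
    using g n by (auto simp: DDM_labeling_def)
  have card: "card V = n + m" using fG fH disj n m V_def by (simp add: card_Un_disjoint)
  have Edef: "E = EG \<union> EH
     \<union> {(v, u). v \<in> VG \<and> 1 \<le> g v \<and> g v \<le> int n \<and> u \<in> VH \<and> w u = - g v}
     \<union> {(u, v). v \<in> VG \<and> 1 \<le> g v \<and> g v \<le> int n \<and> u \<in> VH \<and> w u = g v}"
    unfolding E_def wsum_arcs_def wt_class_def w_def n by auto
  have gr: "\<And>v. v \<in> VG \<Longrightarrow> 1 \<le> g v \<and> g v \<le> int n"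
    using gb by (auto simp: bij_betw_def)
  have orient: "oriented_graph V E"
    unfolding oriented_graph_def
  proof (intro conjI allI impI)
    show "finite V" using fG fH V_def by simp
    show "E \<subseteq> V \<times> V" using EGs EHs unfolding Edef V_def by auto
  next
    fix v show "(v, v) \<notin> E" using nlG nlH disj unfolding Edef by auto
  next
    fix u v assume "(u, v) \<in> E"
    then show "(v, u) \<notin> E" using asG asH disj EGs EHs unfolding Edef by auto
  qed
  have fb: "bij_betw f V {1..int (card V)}"
  proof -
    have "bij_betw f VG {1..int n}"
      using gb by (rule bij_betw_cong[THEN iffD1, rotated]) (simp add: f_def)
    moreover have "bij_betw f VH {int n + 1 .. int n + int m} = bij_betw h VH {int n + 1 .. int n + int m}"
      by (rule bij_betw_cong) (use disj in \<open>auto simp: f_def\<close>)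
    then have "bij_betw f VH {int n + 1 .. int n + int m}" using h by simp
    ultimately have "bij_betw f (VG \<union> VH) ({1..int n} \<union> {int n + 1 .. int n + int m})"
      using disj by (intro bij_betw_combine) auto
    moreover have "{1..int n} \<union> {int n + 1 .. int n + int m} = {1..int (n+m)}" by auto
    ultimately show ?thesis using card V_def by simp
  qed
  have wtV: "wt V E f x = 0" if x: "x \<in> V" for x
  proof (cases "x \<in> VG")
    case True
    have i1: "in_nbrs V E x = in_nbrs VG EG x \<union> wt_class VH EH h (g x)"
      using True EGs EHs disj gr unfolding Edef V_def in_nbrs_def wt_class_def w_def by auto
    have o1: "out_nbrs V E x = out_nbrs VG EG x \<union> wt_class VH EH h (- g x)"
      using True EGs EHs disj gr unfolding Edef V_def out_nbrs_def wt_class_def w_def by auto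
    have d1: "in_nbrs VG EG x \<inter> wt_class VH EH h c = {}" for c
      using disj by (auto simp: in_nbrs_def wt_class_def)
    have d2: "out_nbrs VG EG x \<inter> wt_class VH EH h c = {}" for c
      using disj by (auto simp: out_nbrs_def wt_class_def)
    have fi: "finite (in_nbrs VG EG x)" "finite (out_nbrs VG EG x)" "finite (wt_class VH EH h c)" for c
      using fG fH by (auto simp: in_nbrs_def out_nbrs_def wt_class_def)
    have s1: "(\<Sum>y\<in>in_nbrs VG EG x. f y) = (\<Sum>y\<in>in_nbrs VG EG x. g y)"
      by (rule sum.cong) (auto simp: f_def in_nbrs_def)
    have s2: "(\<Sum>y\<in>out_nbrs VG EG x. f y) = (\<Sum>y\<in>out_nbrs VG EG x. g y)"
      by (rule sum.cong) (auto simp: f_def out_nbrs_def)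
    have s3: "(\<Sum>y\<in>wt_class VH EH h c. f y) = (\<Sum>y\<in>wt_class VH EH h c. h y)" for c
      using disj by (intro sum.cong) (auto simp: f_def wt_class_def)
    have balx: "(\<Sum>y\<in>wt_class VH EH h (g x). h y) = (\<Sum>y\<in>wt_class VH EH h (- g x). h y)"
    proof (cases "g x \<le> k")
      case True
      then show ?thesis using bal gr[OF \<open>x \<in> VG\<close>] by auto
    next
      case False
      have "wt_class VH EH h c = {}" if "\<bar>c\<bar> > k" for c
      proof -
        have "\<bar>w u\<bar> \<le> k" if "u \<in> VH" for u
          unfolding k w_def using fH that by (intro Max_ge) auto
        then show ?thesis using \<open>\<bar>c\<bar> > k\<close> by (force simp: wt_class_def w_def)
      qed
      then show ?thesis using False gr[OF \<open>x \<in> VG\<close>] by simp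
    qed
    show ?thesis
      unfolding wt_def i1 o1
      apply (subst sum.union_disjoint, simp add: fi, simp add: fi, simp add: d1)
      apply (subst sum.union_disjoint, simp add: fi, simp add: fi, simp add: d2)
      using gw True balx unfolding s1 s2 s3 wt_def by simp
  next
    case False
    then have xH: "x \<in> VH" using x V_def by simp
    have i1: "in_nbrs V E x = in_nbrs VH EH x \<union> {v\<in>VG. g v = - w x}"
      using xH EGs EHs disj gr unfolding Edef V_def in_nbrs_def by auto
    have o1: "out_nbrs V E x = out_nbrs VH EH x \<union> {v\<in>VG. g v = w x}"
      using xH EGs EHs disj gr unfolding Edef V_def out_nbrs_def by auto
    have d1: "in_nbrs VH EH x \<inter> {v\<in>VG. P v} = {}" for P
      using disj by (auto simp: in_nbrs_def)
    have d2: "out_nbrs VH EH x \<inter> {v\<in>VG. P v} = {}" for P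
      using disj by (auto simp: out_nbrs_def)
    have fi: "finite (in_nbrs VH EH x)" "finite (out_nbrs VH EH x)" "finite {v\<in>VG. P v}" for P
      using fG fH by (auto simp: in_nbrs_def out_nbrs_def)
    have s1: "(\<Sum>y\<in>in_nbrs VH EH x. f y) = (\<Sum>y\<in>in_nbrs VH EH x. h y)"
      using disj by (intro sum.cong) (auto simp: f_def in_nbrs_def)
    have s2: "(\<Sum>y\<in>out_nbrs VH EH x. f y) = (\<Sum>y\<in>out_nbrs VH EH x. h y)"
      using disj by (intro sum.cong) (auto simp: f_def out_nbrs_def)
    have s3: "(\<Sum>y\<in>{v\<in>VG. g v = c}. f y) = (\<Sum>y\<in>{v\<in>VG. g v = c}. g y)" for c
      by (intro sum.cong) (auto simp: f_def)
    have wk: "\<bar>w x\<bar> \<le> int n"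
    proof -
      have "\<bar>w x\<bar> \<le> k" unfolding k w_def using fH xH by (intro Max_ge) auto
      then show ?thesis using kn by simp
    qed
    show ?thesis
      unfolding wt_def i1 o1
      apply (subst sum.union_disjoint, simp add: fi, simp add: fi, simp add: d1)
      apply (subst sum.union_disjoint, simp add: fi, simp add: fi, simp add: d2)
      unfolding s1 s2 s3 sum_level[OF gb]
      using wk by (simp add: w_def wt_def) arith
  qed
  have "DDMOG V E"
    unfolding DDMOG_def DDM_labeling_def using orient fb wtV by blast
  then show ?thesis using card V_def E_def by simp
qed

end
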